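(* For fixed $\theta$, consider the function of $v\in\mathbb R^d$ \[ H(v,\theta)=\frac{\big\langle F(\Phi(\theta)+\sqrt\epsilon\,v),\ \Phi'(\theta)\big\rangle_\theta}{1-\sqrt\epsilon\langle v,\Phi''(\theta)\rangle_\theta-\sqrt\epsilon\big\langle v,\frac{d}{da}\big[P(a)^{-\top}P(a)^{-1}\big]\big|_{a=\theta}\Phi'(\theta)\big\rangle} \] (defined for $v$ near $0$). Then $H(0,\theta)=\omega_0$ and the derivative of $H$ with respect to $v$ at $v=0$ vanishes: $\frac{\partial H}{\partial v}(0,\theta)\cdot v=0$ for all $v\in\mathbb R^d$. Equivalently, for every fixed $v\in\mathbb R^d$, \[ \langle J(\theta)v,\Phi'(\theta)\rangle_\theta=-\omega_0\frac{d}{d\theta}\langle v,\Phi'(\theta)\rangle_\theta . \]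
   Context: Let $F:\mathbb R^d\to\mathbb R^d$ be $C^2$, and suppose $du/dt=F(u)$ has a periodic solution $u(t)=\Phi(\omega_0 t)$ with $\Phi$ $2\pi$-periodic and $\omega_0>0$ (so $F(\Phi(\theta))=\omega_0\Phi'(\theta)$); let $J(\theta)=DF(\Phi(\theta))$; $\epsilon>0$. Let $P(\theta)$ be a $2\pi$-periodic, $C^2$, everywhere invertible real matrix function whose first column is $\Phi'(\theta)$, and $\mathcal S=\mathrm{diag}(\nu_1,\dots,\nu_d)$ real diagonal with $\nu_1=0$, such that $\omega_0P'(\theta)=J(\theta)P(\theta)-P(\theta)\mathcal S$. Weighted inner product: $\langle x,y\rangle_\theta=\langle P(\theta)^{-1}x,P(\theta)^{-1}y\rangle$ with $\langle\cdot,\cdot\rangle$ the Euclidean inner product; $P^{-\top}$ denotes $(P^{-1})^\top$. *)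

theory Defs
  imports "HOL-Analysis.Analysis"
begin

definition C2_map :: "('a::real_normed_vector \<Rightarrow> 'b::real_normed_vector) \<Rightarrow> bool" where
  "C2_map f \<longleftrightarrow> (\<exists>(Df :: 'a \<Rightarrow> ('a \<Rightarrow>\<^sub>L 'b)) (DDf :: 'a \<Rightarrow> ('a \<Rightarrow>\<^sub>L ('a \<Rightarrow>\<^sub>L 'b))).
      (\<forall>x. (f has_derivative blinfun_apply (Df x)) (at x)) \<and>
      (\<forall>x. (Df has_derivative blinfun_apply (DDf x)) (at x)) \<and>
      continuous_on UNIV DDf)"

definition winner :: "(real \<Rightarrow> real^'n^'n) \<Rightarrow> real \<Rightarrow> real^'n \<Rightarrow> real^'n \<Rightarrow> real" where
  "winner P \<theta> x y = (matrix_inv (P \<theta>) *v x) \<bullet> (matrix_inv (P \<theta>) *v y)"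

definition Hfun :: "(real^'n \<Rightarrow> real^'n) \<Rightarrow> (real \<Rightarrow> real^'n) \<Rightarrow> (real \<Rightarrow> real^'n^'n)
    \<Rightarrow> real \<Rightarrow> real^'n \<Rightarrow> real \<Rightarrow> real" where
  "Hfun F \<Phi> P \<epsilon> v \<theta> =
     (let \<Phi>1 = (\<lambda>a. vector_derivative \<Phi> (at a));
          \<Phi>2 = vector_derivative \<Phi>1 (at \<theta>);
          M' = vector_derivative (\<lambda>a. transpose (matrix_inv (P a)) ** matrix_inv (P a)) (at \<theta>)
      in winner P \<theta> (F (\<Phi> \<theta> + sqrt \<epsilon> *\<^sub>R v)) (\<Phi>1 \<theta>) /
         (1 - sqrt \<epsilon> * winner P \<theta> v \<Phi>2 - sqrt \<epsilon> * (v \<bullet> (M' *v \<Phi>1 \<theta>))))"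

end

theory Submission
  imports Defs
begin


lemma column_axis: "column k (A::real^'n^'m) = A *v axis k 1"
  by (simp add: column_def vec_eq_iff matrix_vector_mult_def axis_def if_distrib cong: if_cong)

lemma mv_axis_nth: "((A::real^'n^'m) *v axis j 1) $ i = A $ i $ j"
  by (simp add: column_axis[symmetric] column_def)

lemma bb_mm: "bounded_bilinear (\<lambda>(A::real^'n^'m) (B::real^'p^'n). A ** B)"
  unfolding bilinear_conv_bounded_bilinear[symmetric] bilinear_def
  by (auto simp: linear_iff vec_eq_iff matrix_matrix_mult_def sum.distrib sum_distrib_left algebra_simps)

lemma bb_mv: "bounded_bilinear (\<lambda>(A::real^'n^'m) (x::real^'n). A *v x)"
  unfolding bilinear_conv_bounded_bilinear[symmetric] bilinear_def
  by (auto simp: linear_iff vec_eq_iff matrix_vector_mult_def sum.distrib sum_distrib_left algebra_simps)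

lemma vec_sum_axis: "(x::'a::real_normed_vector^'n) = (\<Sum>i\<in>UNIV. axis i (x $ i))"
  by (simp add: vec_eq_iff axis_def sum.delta' if_distrib cong: if_cong)

lemma bl_axis: "bounded_linear (axis i :: 'a::real_normed_vector \<Rightarrow> 'a^'n)"
proof (rule bounded_linear_intro[where K=1])
  fix x y :: 'a and r :: real
  show "axis i (x + y) = (axis i x :: 'a^'n) + axis i y" by (simp add: vec_eq_iff axis_def)
  show "axis i (r *\<^sub>R x) = r *\<^sub>R (axis i x :: 'a^'n)" by (simp add: vec_eq_iff axis_def)
  show "norm (axis i x :: 'a^'n) \<le> norm x * 1"
  proof -
    have "(\<Sum>j\<in>UNIV. (norm ((axis i x :: 'a^'n) $ j))\<^sup>2) = (\<Sum>j\<in>UNIV. if j = i then (norm x)\<^sup>2 else 0)"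
      by (rule sum.cong) (auto simp: axis_def)
    then show ?thesis by (simp add: norm_vec_def L2_set_def)
  qed
qed

lemma differentiable_vecI:
  fixes f :: "'a::real_normed_vector \<Rightarrow> 'b::real_normed_vector^'n"
  assumes "\<And>i. (\<lambda>a. f a $ i) differentiable F"
  shows "f differentiable F"
proof -
  have "(\<lambda>a. \<Sum>i\<in>UNIV. axis i (f a $ i)) differentiable F"
  proof (intro differentiable_sum ballI)
    fix i show "(\<lambda>a. axis i (f a $ i)) differentiable F"
      using assms[of i] bounded_linear.has_derivative[OF bl_axis[of i]]
      unfolding differentiable_def by blast
  qed simp
  then show ?thesis by (subst (asm) vec_sum_axis[symmetric])
qed

lemma differentiable_prod_at:
  fixes f :: "'i \<Rightarrow> 'a::real_normed_vector \<Rightarrow> real"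
  assumes "\<And>i. i \<in> I \<Longrightarrow> f i differentiable (at x)"
  shows "(\<lambda>x. \<Prod>i\<in>I. f i x) differentiable (at x)"
proof -
  from assms obtain f' where "\<And>i. i \<in> I \<Longrightarrow> (f i has_derivative f' i) (at x)"
    unfolding differentiable_def by metis
  from has_derivative_prod[of I f f', OF this] show ?thesis
    unfolding differentiable_def by blast
qed

lemma det_differentiable:
  fixes M :: "'a::real_normed_vector \<Rightarrow> real^'n^'n"
  assumes "\<And>i j. (\<lambda>a. M a $ i $ j) differentiable (at x)"
  shows "(\<lambda>a. det (M a)) differentiable (at x)"
  unfolding det_def
  by (intro differentiable_sum ballI differentiable_mult differentiable_const
      differentiable_prod_at assms) simp

lemma nth2_differentiable:
  fixes M :: "'a::real_normed_vector \<Rightarrow> real^'n^'m"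
  assumes "M differentiable (at x)"
  shows "(\<lambda>a. M a $ i $ j) differentiable (at x)"
proof -
  have bl: "bounded_linear (\<lambda>A::real^'n^'m. A $ i $ j)"
    by (rule bounded_linear_compose[OF bounded_linear_vec_nth bounded_linear_vec_nth])
  from assms obtain M' where "(M has_derivative M') (at x)" unfolding differentiable_def by blast
  from bounded_linear.has_derivative[OF bl this] show ?thesis unfolding differentiable_def by blast
qed

lemma matrix_inv_props:
  assumes "invertible (A::real^'n^'n)"
  shows "A ** matrix_inv A = mat 1" "matrix_inv A ** A = mat 1"
  using someI_ex[OF assms[unfolded invertible_def]] unfolding matrix_inv_def by auto

lemma matrix_inv_entry:
  assumes "invertible (A::real^'n^'n)"
  shows "matrix_inv A $ i $ j = det (\<chi> r c. if c = i then axis j 1 $ r else A $ r $ c) / det A"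
proof -
  have d: "det A \<noteq> 0" using assms invertible_det_nz by blast
  have "A *v (matrix_inv A *v axis j 1) = axis j 1"
    by (simp add: matrix_vector_mul_assoc matrix_inv_props(1)[OF assms])
  then have "matrix_inv A *v axis j 1 = (\<chi> k. det(\<chi> r c. if c=k then axis j 1 $ r else A$r$c) / det A)"
    using cramer[OF d] by blast
  then have "(matrix_inv A *v axis j 1) $ i = det (\<chi> r c. if c = i then axis j 1 $ r else A $ r $ c) / det A"
    by simp
  then show ?thesis by (simp add: mv_axis_nth)
qed

lemma matrix_inv_differentiable:
  fixes P :: "real \<Rightarrow> real^'n^'n"
  assumes inv: "\<And>t. invertible (P t)" and dP: "P differentiable (at x)"
  shows "(\<lambda>t. matrix_inv (P t)) differentiable (at x)"
proof (intro differentiable_vecI)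
  fix i j
  have e: "(\<lambda>t. matrix_inv (P t) $ i $ j) =
     (\<lambda>t. det (\<chi> r c. if c = i then axis j 1 $ r else P t $ r $ c) / det (P t))"
    using matrix_inv_entry[OF inv] by auto
  have d0: "det (P x) \<noteq> 0" using inv invertible_det_nz by blast
  have "(\<lambda>t. det (\<chi> r c. if c = i then axis j 1 $ r else P t $ r $ c) / det (P t)) differentiable (at x)"
  proof (intro differentiable_divide det_differentiable d0)
    fix r c
    show "(\<lambda>t. (\<chi> r c. if c = i then axis j 1 $ r else P t $ r $ c) $ r $ c) differentiable (at x)"
      by (cases "c = i") (simp_all add: nth2_differentiable[OF dP])
    show "(\<lambda>t. P t $ r $ c) differentiable (at x)" by (rule nth2_differentiable[OF dP])
  qed
  then show "(\<lambda>t. matrix_inv (P t) $ i $ j) differentiable (at x)" using e by simp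
qed

lemma inner_transpose_mv: "(x::real^'n) \<bullet> (transpose A *v y) = (A *v x) \<bullet> (y::real^'m)"
  by (metis inner_commute dot_lmul_matrix transpose_matrix_vector)

lemma bl_transpose: "bounded_linear (transpose :: real^'n^'m \<Rightarrow> real^'m^'n)"
  unfolding linear_conv_bounded_linear[symmetric]
  by (auto simp: linear_iff vec_eq_iff transpose_def)

lemma bl_mv_nth: "bounded_linear (\<lambda>A::real^'n^'m. (A *v v) $ k)"
  by (rule bounded_linear_compose[OF bounded_linear_vec_nth bounded_bilinear.bounded_linear_left[OF bb_mv]])

lemma diag_mv_nth: "((\<chi> i j. if i = j then \<nu> $ i else 0) *v (y::real^'n)) $ k = \<nu> $ k * y $ k"
proof -
  have "((\<chi> i j. if i = j then \<nu> $ i else 0) *v (y::real^'n)) $ k = (\<Sum>j\<in>UNIV. if j = k then \<nu> $ k * y $ k else 0)"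
    unfolding matrix_vector_mult_def vec_lambda_beta by (intro sum.cong) auto
  then show ?thesis by simp
qed


theorem mainTheorem4:
  fixes F :: "real^'n \<Rightarrow> real^'n"
    and \<Phi> :: "real \<Rightarrow> real^'n"
    and P :: "real \<Rightarrow> real^'n^'n"
    and \<nu> :: "real^'n"
    and k :: 'n
    and \<omega>\<^sub>0 \<epsilon> \<theta> :: real
  assumes F_C2: "C2_map F"
    and \<Phi>_diff: "\<forall>t. \<Phi> differentiable (at t)"
    and \<Phi>_per: "\<forall>t. \<Phi> (t + 2 * pi) = \<Phi> t"
    and \<omega>_pos: "\<omega>\<^sub>0 > 0"
    and orbit: "\<forall>t. F (\<Phi> t) = \<omega>\<^sub>0 *\<^sub>R vector_derivative \<Phi> (at t)"
    and \<epsilon>_pos: "\<epsilon> > 0"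
    and P_C2: "C2_map P"
    and P_per: "\<forall>t. P (t + 2 * pi) = P t"
    and P_inv: "\<forall>t. invertible (P t)"
    and P_col: "\<forall>t. column k (P t) = vector_derivative \<Phi> (at t)"
    and \<nu>_k: "\<nu> $ k = 0"
    and floquet: "\<forall>t. \<omega>\<^sub>0 *\<^sub>R vector_derivative P (at t) =
        matrix (frechet_derivative F (at (\<Phi> t))) ** P t
        - P t ** (\<chi> i j. if i = j then \<nu> $ i else 0)"
  shows "Hfun F \<Phi> P \<epsilon> 0 \<theta> = \<omega>\<^sub>0
    \<and> ((\<lambda>v. Hfun F \<Phi> P \<epsilon> v \<theta>) has_derivative (\<lambda>v. 0)) (at 0)
    \<and> (\<forall>v. winner P \<theta> (matrix (frechet_derivative F (at (\<Phi> \<theta>))) *v v)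
                 (vector_derivative \<Phi> (at \<theta>))
          = - \<omega>\<^sub>0 * deriv (\<lambda>a. winner P a v (vector_derivative \<Phi> (at a))) \<theta>)"
  proof -
  have mm: "bounded_bilinear (\<lambda>(A::real^'n^'n) (B::real^'n^'n). A ** B)" by (rule bb_mm)
  have mv: "bounded_bilinear (\<lambda>(A::real^'n^'n) (x::real^'n). A *v x)" by (rule bb_mv)
  obtain DF :: "real^'n \<Rightarrow> ((real^'n) \<Rightarrow>\<^sub>L (real^'n))" where
    hDF: "\<And>x. (F has_derivative blinfun_apply (DF x)) (at x)"
    using F_C2 unfolding C2_map_def by blast
  obtain DP :: "real \<Rightarrow> (real \<Rightarrow>\<^sub>L (real^'n^'n))" where
    hDP: "\<And>x. (P has_derivative blinfun_apply (DP x)) (at x)"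
    using P_C2 unfolding C2_map_def by blast
  have Pdiff: "\<And>t. P differentiable (at t)" using hDP unfolding differentiable_def by blast
  define Pd where "Pd t = vector_derivative P (at t)" for t
  have hPd: "\<And>t. (P has_vector_derivative Pd t) (at t)"
    using Pdiff vector_derivative_works unfolding Pd_def by blast
  define Q where "Q = (\<lambda>t. matrix_inv (P t))"
  have Qrw: "\<And>t. matrix_inv (P t) = Q t" by (simp add: Q_def)
  have QP: "\<And>t. Q t ** P t = mat 1" and PQ: "\<And>t. P t ** Q t = mat 1"
    using matrix_inv_props P_inv unfolding Q_def by auto
  have Qdiff: "\<And>t. Q differentiable (at t)"
    unfolding Q_def using matrix_inv_differentiable P_inv Pdiff by blast
  define Qd where "Qd t = vector_derivative Q (at t)" for t
  have hQd: "\<And>t. (Q has_vector_derivative Qd t) (at t)"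
    using Qdiff vector_derivative_works unfolding Qd_def by blast
  have Qd_eq: "Qd t = - (Q t ** Pd t ** Q t)" for t
  proof -
    have "((\<lambda>s. Q s ** P s) has_vector_derivative (Q t ** Pd t + Qd t ** P t)) (at t)"
      by (rule bounded_bilinear.has_vector_derivative[OF mm hQd hPd])
    moreover have "((\<lambda>s. Q s ** P s) has_vector_derivative 0) (at t)" using QP by simp
    ultimately have "Q t ** Pd t + Qd t ** P t = 0" using vector_derivative_unique_at by blast
    then have "(Q t ** Pd t + Qd t ** P t) ** Q t = 0" by simp
    then have "Q t ** Pd t ** Q t + Qd t = 0"
      by (simp add: bounded_bilinear.add_left[OF mm] PQ flip: matrix_mul_assoc)
    then show ?thesis by (simp add: eq_neg_iff_add_eq_0 add.commute)
  qed
  define e where "e = (axis k 1 :: real^'n)"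
  have Phi1: "\<And>a. vector_derivative \<Phi> (at a) = P a *v e"
    using P_col column_axis unfolding e_def by metis
  have QPe: "\<And>t. Q t *v (P t *v e) = e"
    by (simp add: matrix_vector_mul_assoc QP)
  have ek: "\<And>x. x \<bullet> e = x $ k" by (simp add: e_def inner_axis)
  define J where "J = matrix (frechet_derivative F (at (\<Phi> \<theta>)))"
  have FJ: "\<And>h. blinfun_apply (DF (\<Phi> \<theta>)) h = J *v h"
  proof -
    have "frechet_derivative F (at (\<Phi> \<theta>)) = blinfun_apply (DF (\<Phi> \<theta>))"
      using frechet_derivative_at[OF hDF] by simp
    then show "\<And>h. blinfun_apply (DF (\<Phi> \<theta>)) h = J *v h"
      unfolding J_def using matrix_vector_mul(3)[OF blinfun.bounded_linear_right] by metis
  qed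
  have K: "\<omega>\<^sub>0 * (Qd \<theta> *v h) $ k = - (Q \<theta> *v (J *v h)) $ k" for h
  proof -
    let ?S = "(\<chi> i j. if i = j then \<nu> $ i else 0) :: real^'n^'n"
    have fl: "\<omega>\<^sub>0 *\<^sub>R Pd \<theta> = J ** P \<theta> - P \<theta> ** ?S"
      using floquet unfolding Pd_def J_def by blast
    have 1: "Qd \<theta> *v h = - (Q \<theta> *v (Pd \<theta> *v (Q \<theta> *v h)))"
      by (simp add: Qd_eq bounded_bilinear.minus_left[OF mv] matrix_vector_mul_assoc matrix_mul_assoc)
    have 2: "\<omega>\<^sub>0 *\<^sub>R (Pd \<theta> *v y) = J *v (P \<theta> *v y) - P \<theta> *v (?S *v y)" for y
    proof -
      have "\<omega>\<^sub>0 *\<^sub>R (Pd \<theta> *v y) = (\<omega>\<^sub>0 *\<^sub>R Pd \<theta>) *v y"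
        by (simp add: bounded_bilinear.scaleR_left[OF mv])
      also have "\<dots> = J *v (P \<theta> *v y) - P \<theta> *v (?S *v y)"
        by (simp add: fl bounded_bilinear.diff_left[OF mv] matrix_vector_mul_assoc)
      finally show ?thesis .
    qed
    have "\<omega>\<^sub>0 *\<^sub>R (Qd \<theta> *v h) = - (Q \<theta> *v (J *v h)) + ?S *v (Q \<theta> *v h)"
    proof -
      have "\<omega>\<^sub>0 *\<^sub>R (Qd \<theta> *v h) = - (Q \<theta> *v (\<omega>\<^sub>0 *\<^sub>R (Pd \<theta> *v (Q \<theta> *v h))))"
        by (simp add: 1 matrix_vector_mult_scaleR)
      also have "\<dots> = - (Q \<theta> *v (J *v (P \<theta> *v (Q \<theta> *v h)) - P \<theta> *v (?S *v (Q \<theta> *v h))))"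
        by (simp add: 2)
      also have "\<dots> = - (Q \<theta> *v (J *v h)) + ?S *v (Q \<theta> *v h)"
      proof -
        have QPX: "\<And>X::real^'n^'n. Q \<theta> ** (P \<theta> ** X) = X" by (simp add: matrix_mul_assoc QP)
        show ?thesis by (simp add: matrix_vector_mult_diff_distrib matrix_vector_mul_assoc PQ QP QPX)
      qed
      finally show ?thesis .
    qed
    then have "(\<omega>\<^sub>0 *\<^sub>R (Qd \<theta> *v h)) $ k = - (Q \<theta> *v (J *v h)) $ k + \<nu> $ k * (Q \<theta> *v h) $ k"
      by (simp add: diag_mv_nth)
    then show ?thesis using \<nu>_k by simp
  qed
  define \<Phi>2 where "\<Phi>2 = Pd \<theta> *v e"
  have Phi1fun: "(\<lambda>a. vector_derivative \<Phi> (at a)) = (\<lambda>a. P a *v e)" using Phi1 by auto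
  have Phi2_eq: "vector_derivative (\<lambda>a. vector_derivative \<Phi> (at a)) (at \<theta>) = \<Phi>2"
  proof -
    have "((\<lambda>a. P a *v e) has_vector_derivative Pd \<theta> *v e) (at \<theta>)"
      by (rule bounded_linear.has_vector_derivative[OF bounded_bilinear.bounded_linear_left[OF mv] hPd])
    then show ?thesis unfolding Phi1fun \<Phi>2_def by (rule vector_derivative_at)
  qed
  define M' where "M' = transpose (Q \<theta>) ** Qd \<theta> + transpose (Qd \<theta>) ** Q \<theta>"
  have M'_eq: "vector_derivative (\<lambda>a. transpose (Q a) ** Q a) (at \<theta>) = M'"
  proof -
    have "((\<lambda>a. transpose (Q a) ** Q a) has_vector_derivative M') (at \<theta>)"
      unfolding M'_def
      by (rule bounded_bilinear.has_vector_derivative[OF bb_mm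
            bounded_linear.has_vector_derivative[OF bl_transpose hQd] hQd])
    then show ?thesis by (rule vector_derivative_at)
  qed
  have Hrw: "Hfun F \<Phi> P \<epsilon> v \<theta> = (Q \<theta> *v F (\<Phi> \<theta> + sqrt \<epsilon> *\<^sub>R v)) $ k /
     (1 - sqrt \<epsilon> * ((Q \<theta> *v v) \<bullet> (Q \<theta> *v \<Phi>2)) - sqrt \<epsilon> * (v \<bullet> (M' *v (P \<theta> *v e))))" for v
    unfolding Hfun_def Let_def winner_def Phi2_eq Qrw M'_eq
    by (simp add: Phi1 QPe ek)
  have N0: "(Q \<theta> *v F (\<Phi> \<theta>)) $ k = \<omega>\<^sub>0"
  proof -
    have "e $ k = 1" by (simp add: e_def)
    then show ?thesis using orbit by (simp add: Phi1 matrix_vector_mult_scaleR QPe)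
  qed
  have claim1: "Hfun F \<Phi> P \<epsilon> 0 \<theta> = \<omega>\<^sub>0" by (simp add: Hrw N0)
  have I2: "(Q \<theta> *v h) \<bullet> (Q \<theta> *v \<Phi>2) + h \<bullet> (M' *v (P \<theta> *v e)) = (Qd \<theta> *v h) $ k" for h
  proof -
    have a: "Qd \<theta> *v (P \<theta> *v e) = - (Q \<theta> *v \<Phi>2)"
      by (simp add: Qd_eq \<Phi>2_def bounded_bilinear.minus_left[OF mv] QPe
            flip: matrix_vector_mul_assoc)
    have "M' *v (P \<theta> *v e) = transpose (Q \<theta>) *v (Qd \<theta> *v (P \<theta> *v e)) + transpose (Qd \<theta>) *v (Q \<theta> *v (P \<theta> *v e))"
      by (simp add: M'_def bounded_bilinear.add_left[OF mv] del: transpose_matrix_vector flip: matrix_vector_mul_assoc)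
    then have "h \<bullet> (M' *v (P \<theta> *v e)) = (Q \<theta> *v h) \<bullet> (- (Q \<theta> *v \<Phi>2)) + (Qd \<theta> *v h) \<bullet> e"
      by (simp add: a QPe inner_add_right inner_transpose_mv del: transpose_matrix_vector)
    then show ?thesis by (simp add: ek)
  qed
  define L where "L h = sqrt \<epsilon> * ((Q \<theta> *v h) \<bullet> (Q \<theta> *v \<Phi>2)) + sqrt \<epsilon> * (h \<bullet> (M' *v (P \<theta> *v e)))" for h
  have linL: "linear L"
    unfolding linear_iff L_def
    by (simp add: matrix_vector_right_distrib matrix_vector_mult_scaleR inner_add_left algebra_simps)
  have blL: "bounded_linear L" using linL linear_conv_bounded_linear by blast
  have hD: "((\<lambda>v. 1 - L v) has_derivative (\<lambda>h. 0 - L h)) (at 0)"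
    by (intro has_derivative_diff has_derivative_const bounded_linear_imp_has_derivative blL)
  have hinner: "((\<lambda>v. \<Phi> \<theta> + sqrt \<epsilon> *\<^sub>R v) has_derivative (\<lambda>h. sqrt \<epsilon> *\<^sub>R h)) (at 0)"
    by (auto intro!: derivative_eq_intros)
  have hF: "((\<lambda>v. F (\<Phi> \<theta> + sqrt \<epsilon> *\<^sub>R v)) has_derivative (\<lambda>h. J *v (sqrt \<epsilon> *\<^sub>R h))) (at 0)"
    using diff_chain_at[OF hinner hDF[of "\<Phi> \<theta> + sqrt \<epsilon> *\<^sub>R 0"]] FJ by (simp add: o_def)
  have hN: "((\<lambda>v. (Q \<theta> *v F (\<Phi> \<theta> + sqrt \<epsilon> *\<^sub>R v)) $ k) has_derivative
        (\<lambda>h. (Q \<theta> *v (J *v (sqrt \<epsilon> *\<^sub>R h))) $ k)) (at 0)"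
    by (rule bounded_linear.has_derivative[OF bounded_linear_compose[OF bounded_linear_vec_nth
          bounded_bilinear.bounded_linear_right[OF mv]] hF])
  have D0: "1 - L 0 \<noteq> 0" using linL by (simp add: linear_0)
  have Hfun2: "(\<lambda>v. Hfun F \<Phi> P \<epsilon> v \<theta>) = (\<lambda>v. (Q \<theta> *v F (\<Phi> \<theta> + sqrt \<epsilon> *\<^sub>R v)) $ k / (1 - L v))"
    by (rule ext) (simp add: Hrw L_def algebra_simps)
  have claim2: "((\<lambda>v. Hfun F \<Phi> P \<epsilon> v \<theta>) has_derivative (\<lambda>v. 0)) (at 0)"
    unfolding Hfun2
  proof (rule has_derivative_eq_rhs[OF has_derivative_divide'[OF hN hD D0]], rule ext)
    fix h
    have L0: "L 0 = 0" using linL by (simp add: linear_0)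
    have Lh: "\<omega>\<^sub>0 * L h = - sqrt \<epsilon> * (Q \<theta> *v (J *v h)) $ k"
    proof -
      have "L h = sqrt \<epsilon> * (Qd \<theta> *v h) $ k" using I2[of h] unfolding L_def
        by (simp add: distrib_left[symmetric])
      then have "\<omega>\<^sub>0 * L h = sqrt \<epsilon> * (\<omega>\<^sub>0 * (Qd \<theta> *v h) $ k)" by simp
      then show ?thesis using K[of h] by simp
    qed
    have "(Q \<theta> *v (J *v (sqrt \<epsilon> *\<^sub>R h))) $ k = sqrt \<epsilon> * (Q \<theta> *v (J *v h)) $ k"
      by (simp add: matrix_vector_mult_scaleR)
    then show "((Q \<theta> *v (J *v (sqrt \<epsilon> *\<^sub>R h))) $ k * (1 - L 0) -
          (Q \<theta> *v F (\<Phi> \<theta> + sqrt \<epsilon> *\<^sub>R 0)) $ k * (0 - L h)) / ((1 - L 0) * (1 - L 0)) = 0"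
      using Lh by (simp add: L0 N0)
  qed
  have claim3: "winner P \<theta> (J *v v) (vector_derivative \<Phi> (at \<theta>))
          = - \<omega>\<^sub>0 * deriv (\<lambda>a. winner P a v (vector_derivative \<Phi> (at a))) \<theta>" for v
  proof -
    have g: "(\<lambda>a. winner P a v (vector_derivative \<Phi> (at a))) = (\<lambda>a. (Q a *v v) $ k)"
      by (rule ext) (simp add: winner_def Qrw Phi1 QPe ek)
    have "((\<lambda>a. (Q a *v v) $ k) has_vector_derivative (Qd \<theta> *v v) $ k) (at \<theta>)"
      by (rule bounded_linear.has_vector_derivative[OF bl_mv_nth hQd])
    then have "((\<lambda>a. (Q a *v v) $ k) has_real_derivative (Qd \<theta> *v v) $ k) (at \<theta>)"
      by (simp add: has_real_derivative_iff_has_vector_derivative)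
    then have "deriv (\<lambda>a. (Q a *v v) $ k) \<theta> = (Qd \<theta> *v v) $ k" by (rule DERIV_imp_deriv)
    then show ?thesis using K[of v] by (simp add: g winner_def Qrw Phi1 QPe ek)
  qed
  show ?thesis using claim1 claim2 claim3 unfolding J_def by blast
qed

end
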